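(* Let $\mathcal{A}=\{\alpha_1<\dots<\alpha_m\}\subset(0,1)$, $|\mathcal{A}|=m$, $d_{\mathcal{A}}=\min_{\alpha\in\mathcal{A}}\min(\alpha,1-\alpha)$. Let $(b_t)$ be base forecasts with $b_t\in\mathcal{K}$ and $(y_t)$ real outcomes with $|y_t-b_t^{\alpha}|\le R$ for all $\alpha\in\mathcal{A}$, all $t$, for some $R>0$. Run MultiQT with constant delay $D\ge0$, learning rate $\eta>0$ and initial hidden offset $\tilde\theta_1\in\mathcal{K}$. Then for every $T\ge1$ and every $\alpha\in\mathcal{A}$, $$\Bigg|\frac{1}{T}\sum_{t=1}^T \mathrm{cov}_t^{\alpha}-\alpha\Bigg|\le \frac{2\|\tilde\theta_1\|_2}{\eta T}+\sqrt{\frac{|\mathcal{A}|(2D+1)}{T}+\frac{2R|\mathcal{A}|^{3/2}}{\eta\, d_{\mathcal{A}}\,T}}+\frac{D|\mathcal{A}|^{1/2}}{T}.$$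
   Context: $\mathcal{K}=\{x\in\mathbb{R}^m:x_1\le\dots\le x_m\}$; $\Pi_C$ denotes Euclidean projection onto a closed convex set $C$, and $C-v=\{x-v:x\in C\}$. MultiQT with constant delay $D\ge0$: for $t=1,2,\dots$, set $\theta_t=\Pi_{\mathcal{K}-b_t}(\tilde\theta_t)$, output $q_t=b_t+\theta_t$ (equivalently $q_t=\Pi_{\mathcal{K}}(b_t+\tilde\theta_t)$), define $\mathrm{cov}_t^{\alpha}=\mathbb{1}\{y_t\le q_t^{\alpha}\}$, and update the hidden offset by $\tilde\theta_{t+1}^{\alpha}=\tilde\theta_t^{\alpha}-\eta(\mathrm{cov}_{t-D}^{\alpha}-\alpha)$ for $t>D$ and $\tilde\theta_{t+1}=\tilde\theta_t$ for $t\le D$ (the outcome $y_s$ becomes available only after the forecast at time $s+D$ is made). *)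

theory Defs
  imports "HOL-Analysis.Analysis"
begin

text \<open>The cone K of vectors with nondecreasing coordinates; coordinates are indexed by a
finite linearly ordered type whose order is the order alpha_1 < ... < alpha_m.\<close>
definition monoK :: "(real ^ 'n::{finite,linorder}) set" where
  "monoK = {x. \<forall>i j. i \<le> j \<longrightarrow> x $ i \<le> x $ j}"

definition mqt_theta :: "(nat \<Rightarrow> real ^ 'n::{finite,linorder}) \<Rightarrow> (nat \<Rightarrow> real ^ 'n::{finite,linorder}) \<Rightarrow> nat \<Rightarrow> real ^ 'n::{finite,linorder}" where
  "mqt_theta b th t = closest_point ((\<lambda>x. x - b t) ` monoK) (th t)"

definition mqt_q :: "(nat \<Rightarrow> real ^ 'n::{finite,linorder}) \<Rightarrow> (nat \<Rightarrow> real ^ 'n::{finite,linorder}) \<Rightarrow> nat \<Rightarrow> real ^ 'n::{finite,linorder}" where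
  "mqt_q b th t = b t + mqt_theta b th t"

definition mqt_cov :: "(nat \<Rightarrow> real) \<Rightarrow> (nat \<Rightarrow> real ^ 'n::{finite,linorder}) \<Rightarrow> (nat \<Rightarrow> real ^ 'n::{finite,linorder}) \<Rightarrow> nat \<Rightarrow> 'n::{finite,linorder} \<Rightarrow> real" where
  "mqt_cov y b th t a = (if y t \<le> mqt_q b th t $ a then 1 else 0)"

end

theory Submission
  imports Defs
begin

lemma S_eq: "(\<lambda>x. x - bb) ` monoK = {z :: real ^ 'n::{finite,linorder}. \<forall>i j. i \<le> j \<longrightarrow> z$i + bb$i \<le> z$j + bb$j}"
proof (intro set_eqI iffI)
  fix z assume "z \<in> (\<lambda>x. x - bb) ` monoK"
  then show "z \<in> {z. \<forall>i j. i \<le> j \<longrightarrow> z$i + bb$i \<le> z$j + bb$j}" by (auto simp: monoK_def)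
next
  fix z assume "z \<in> {z :: real ^ 'n::{finite,linorder}. \<forall>i j. i \<le> j \<longrightarrow> z$i + bb$i \<le> z$j + bb$j}"
  then have "z + bb \<in> monoK" by (auto simp: monoK_def)
  then show "z \<in> (\<lambda>x. x - bb) ` monoK" by (rule rev_image_eqI) simp
qed

lemma S_closed: "closed ((\<lambda>x. x - bb) ` (monoK :: (real ^ 'n::{finite,linorder}) set))"
  unfolding S_eq
  by (intro closed_Collect_all closed_Collect_imp closed_Collect_le) (auto intro!: continuous_intros)

lemma S_convex: "convex ((\<lambda>x. x - bb) ` (monoK :: (real ^ 'n::{finite,linorder}) set))"
  unfolding S_eq convex_def
proof (clarsimp)
  fix x y :: "real ^ 'n::{finite,linorder}" and u v :: real and i j :: 'n
  assume x: "\<forall>i j. i \<le> j \<longrightarrow> x $ i + bb $ i \<le> x $ j + bb $ j"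
    and y: "\<forall>i j. i \<le> j \<longrightarrow> y $ i + bb $ i \<le> y $ j + bb $ j"
    and u: "0 \<le> u" and v: "0 \<le> v" and uv: "u + v = 1" and ij: "i \<le> j"
  have "u * (x$i + bb$i) \<le> u * (x$j + bb$j)" using x ij u by (simp add: mult_left_mono)
  moreover have "v * (y$i + bb$i) \<le> v * (y$j + bb$j)" using y ij v by (simp add: mult_left_mono)
  ultimately have "u * (x$i + bb$i) + v * (y$i + bb$i) \<le> u * (x$j + bb$j) + v * (y$j + bb$j)" by simp
  then show "u * x $ i + v * y $ i + bb $ i \<le> u * x $ j + v * y $ j + bb $ j"
  proof -
    have "bb$i = u * bb$i + v * bb$i" "bb$j = u * bb$j + v * bb$j"
      using uv by (metis distrib_right mult_1)+
    then show ?thesis using \<open>u * (x$i + bb$i) + v * (y$i + bb$i) \<le> u * (x$j + bb$j) + v * (y$j + bb$j)\<close>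
      by (simp add: algebra_simps)
  qed
qed

lemma S_ne: "(\<lambda>x. x - bb) ` (monoK :: (real ^ 'n::{finite,linorder}) set) \<noteq> {}"
proof -
  have "0 \<in> (monoK :: (real ^ 'n::{finite,linorder}) set)" by (simp add: monoK_def)
  then show ?thesis by blast
qed

lemma key:
  fixes bb th :: "real ^ 'n::{finite,linorder}" and yy R :: real and alpha :: "'n \<Rightarrow> real"
  assumes amono: "mono alpha" and arange: "\<forall>a. 0 < alpha a \<and> alpha a < 1"
    and bnd: "\<forall>a. \<bar>yy - bb$a\<bar> \<le> R"
  shows "inner th (\<chi> a. (if yy \<le> (bb + closest_point ((\<lambda>x. x - bb) ` monoK) th) $ a then 1 else 0) - alpha a)
           \<ge> - (real CARD('n) * R)"
proof -
  define S where "S = (\<lambda>x. x - bb) ` (monoK :: (real ^ 'n::{finite,linorder}) set)"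
  define \<theta> where "\<theta> = closest_point S th"
  define q where "q = bb + \<theta>"
  define c where "c = (\<lambda>a. if yy \<le> q $ a then 1 else (0::real))"
  define v where "v = (\<chi> a. alpha a - c a)"
  have clS: "closed S" and cvS: "convex S" and neS: "S \<noteq> {}"
    unfolding S_def by (rule S_closed, rule S_convex, rule S_ne)
  have thS: "\<theta> \<in> S" unfolding \<theta>_def by (rule closest_point_in_set[OF clS neS])
  then have qmono: "\<And>i j. i \<le> j \<Longrightarrow> q$i \<le> q$j"
    unfolding S_def S_eq q_def by (auto simp: add.commute)
  define G where "G = (\<lambda>(i,j). q$j - q$i) ` {(i,j). q$i < yy \<and> yy \<le> q$j}"
  define \<epsilon> where "\<epsilon> = Min (insert 1 G)"
  have finG: "finite G" unfolding G_def by simp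
  have Gpos: "\<forall>g\<in>G. g > 0" unfolding G_def by auto
  have epos: "\<epsilon> > 0" unfolding \<epsilon>_def using finG Gpos by (simp add: Min_gr_iff)
  have ele1: "\<epsilon> \<le> 1" unfolding \<epsilon>_def using finG by simp
  have egap: "\<epsilon> \<le> q$j - q$i" if "q$i < yy" "yy \<le> q$j" for i j
  proof -
    have "q$j - q$i \<in> G" unfolding G_def using that by force
    then show ?thesis unfolding \<epsilon>_def using finG by simp
  qed
  have zS: "\<theta> + \<epsilon> *\<^sub>R v \<in> S"
    unfolding S_def S_eq
  proof (clarify)
    fix i j :: 'n assume ij: "i \<le> j"
    have ai: "alpha i \<le> alpha j" using amono ij by (simp add: mono_def)
    have ea: "\<epsilon> * alpha i \<le> \<epsilon> * alpha j" using ai epos by (simp add: mult_left_mono)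
    have "q$i + \<epsilon> * (alpha i - c i) \<le> q$j + \<epsilon> * (alpha j - c j)"
    proof (cases "yy \<le> q$i")
      case True
      then have "yy \<le> q$j" using qmono[OF ij] by linarith
      then show ?thesis using True qmono[OF ij] ea by (simp add: c_def algebra_simps)
    next
      case False
      show ?thesis
      proof (cases "yy \<le> q$j")
        case True
        have "\<epsilon> \<le> q$j - q$i" using egap False True by simp
        moreover have "\<epsilon> * alpha i \<le> \<epsilon> * alpha j" using ai epos by (simp add: mult_left_mono)
        ultimately show ?thesis using False True by (simp add: c_def algebra_simps)
      next
        case F2: False
        then show ?thesis using False F2 qmono[OF ij] ea by (simp add: c_def algebra_simps)
      qed
    qed
    then show "(\<theta> + \<epsilon> *\<^sub>R v) $ i + bb $ i \<le> (\<theta> + \<epsilon> *\<^sub>R v) $ j + bb $ j"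
      by (simp add: v_def q_def algebra_simps)
  qed
  have "inner (th - \<theta>) ((\<theta> + \<epsilon> *\<^sub>R v) - \<theta>) \<le> 0"
    unfolding \<theta>_def by (rule closest_point_dot[OF cvS clS zS[unfolded \<theta>_def]])
  then have "\<epsilon> * inner (th - \<theta>) v \<le> 0" by simp
  then have i1: "inner (th - \<theta>) v \<le> 0" using epos by (simp add: mult_le_0_iff)
  have "inner \<theta> v = (\<Sum>a\<in>UNIV. \<theta>$a * v$a)" by (simp add: inner_vec_def)
  also have "\<dots> \<le> (\<Sum>a\<in>(UNIV::'n set). R)"
  proof (rule sum_mono)
    fix a :: 'n
    have ta: "\<theta>$a = q$a - bb$a" by (simp add: q_def)
    have b: "\<bar>yy - bb$a\<bar> \<le> R" using bnd by simp
    have al: "0 < alpha a" "alpha a < 1" using arange by auto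
    show "\<theta>$a * v$a \<le> R"
    proof (cases "yy \<le> q$a")
      case True
      then have "v$a = alpha a - 1" by (simp add: v_def c_def)
      moreover have "\<theta>$a \<ge> - R" using ta True b by linarith
      moreover have R0: "R \<ge> 0" using b by linarith
      moreover have "(- \<theta>$a) * (1 - alpha a) \<le> R * (1 - alpha a)"
        using \<open>\<theta>$a \<ge> - R\<close> al by (intro mult_right_mono) auto
      moreover have "R * (1 - alpha a) \<le> R * 1" using R0 al by (intro mult_left_mono) auto
      moreover have "\<theta>$a * v$a = (- \<theta>$a) * (1 - alpha a)"
        unfolding \<open>v$a = alpha a - 1\<close> by (simp add: algebra_simps)
      ultimately show ?thesis by linarith
    next
      case False
      then have "v$a = alpha a" by (simp add: v_def c_def)
      moreover have "\<theta>$a \<le> R" using ta False b by linarith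
      moreover have R0: "R \<ge> 0" using b by linarith
      moreover have "\<theta>$a * alpha a \<le> R * alpha a"
        using \<open>\<theta>$a \<le> R\<close> al by (intro mult_right_mono) auto
      moreover have "R * alpha a \<le> R * 1" using R0 al by (intro mult_left_mono) auto
      ultimately show ?thesis by simp
    qed
  qed
  also have "\<dots> = real CARD('n) * R" by simp
  finally have i2: "inner \<theta> v \<le> real CARD('n) * R" .
  have "inner th v \<le> real CARD('n) * R" using i1 i2 by (simp add: inner_diff_left)
  moreover have "(\<chi> a. c a - alpha a) = - v" by (simp add: v_def vec_eq_iff)
  ultimately show ?thesis unfolding c_def q_def \<theta>_def S_def by simp
qed

theorem proposition7:
  fixes alpha :: "'n::{finite,linorder} \<Rightarrow> real"
    and b :: "nat \<Rightarrow> real ^ 'n::{finite,linorder}" and y :: "nat \<Rightarrow> real"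
    and R eta :: real and D :: nat and th :: "nat \<Rightarrow> real ^ 'n::{finite,linorder}"
  assumes alpha_mono: "strict_mono alpha"
    and alpha_range: "\<forall>a. 0 < alpha a \<and> alpha a < 1"
    and b_in_K: "\<forall>t\<ge>1. b t \<in> monoK"
    and R_pos: "R > 0"
    and bounded: "\<forall>t\<ge>1. \<forall>a. \<bar>y t - b t $ a\<bar> \<le> R"
    and eta_pos: "eta > 0"
    and init: "th 1 \<in> monoK"
    and delay_phase: "\<forall>t. 1 \<le> t \<and> t \<le> D \<longrightarrow> th (Suc t) = th t"
    and update: "\<forall>t>D. th (Suc t) = th t - eta *\<^sub>R (\<chi> a. mqt_cov y b th (t - D) a - alpha a)"
  shows "\<forall>T\<ge>1. \<forall>a.
    \<bar>(\<Sum>t=1..T. mqt_cov y b th t a) / real T - alpha a\<bar>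
      \<le> 2 * norm (th 1) / (eta * real T)
        + sqrt (real CARD('n::{finite,linorder}) * (2 * real D + 1) / real T
                + 2 * R * real CARD('n::{finite,linorder}) powr (3/2)
                  / (eta * (Min (range (\<lambda>a. min (alpha a) (1 - alpha a)))) * real T))
        + real D * sqrt (real CARD('n::{finite,linorder})) / real T"
proof -
  define m where "m = real CARD('n)"
  define g where "g = (\<lambda>s. (\<chi> a. mqt_cov y b th s a - alpha a) :: real ^ 'n::{finite,linorder})"
  define C where "C = 2 * eta * m * R + eta^2 * m * (2 * real D + 1)"
  have m1: "m \<ge> 1" unfolding m_def by simp
  have R0: "R \<ge> 0" using R_pos by simp
  have upd: "th (Suc t) = th t - eta *\<^sub>R g (t - D)" if "t > D" for t
    using update that unfolding g_def by blast
  have gcomp: "\<bar>g s $ a\<bar> \<le> 1" for s a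
    using alpha_range[rule_format, of a] by (auto simp: g_def mqt_cov_def)
  have ipb: "\<bar>inner u w\<bar> \<le> m" if "\<And>a. \<bar>u$a\<bar> \<le> 1" "\<And>a. \<bar>w$a\<bar> \<le> 1" for u w :: "real ^ 'n::{finite,linorder}"
  proof -
    have "\<bar>inner u w\<bar> = \<bar>\<Sum>a\<in>UNIV. u$a * w$a\<bar>" by (simp add: inner_vec_def)
    also have "\<dots> \<le> (\<Sum>a\<in>UNIV. \<bar>u$a * w$a\<bar>)" by (rule sum_abs)
    also have "\<dots> \<le> (\<Sum>a\<in>(UNIV::'n set). 1)"
    proof (rule sum_mono)
      fix a
      have "\<bar>u$a\<bar> * \<bar>w$a\<bar> \<le> 1 * 1" using that[of a] by (intro mult_mono) auto
      then show "\<bar>u$a * w$a\<bar> \<le> 1" by (simp add: abs_mult)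
    qed
    finally show ?thesis by (simp add: m_def)
  qed
  have delay: "th t = th 1" if "1 \<le> t" "t \<le> D + 1" for t
    using that
  proof (induction t)
    case 0 then show ?case by simp
  next
    case (Suc t)
    show ?case
    proof (cases "t = 0")
      case True then show ?thesis by simp
    next
      case False
      then have "th (Suc t) = th t" using delay_phase Suc.prems by auto
      then show ?thesis using Suc False by simp
    qed
  qed
  have F1: "th (D + 1 + n) = th 1 - eta *\<^sub>R (\<Sum>s=1..n. g s)" for n
  proof (induction n)
    case 0 then show ?case using delay[of "D+1"] by simp
  next
    case (Suc n)
    have "th (D + 1 + Suc n) = th (Suc (D + 1 + n))" by simp
    also have "\<dots> = th (D + 1 + n) - eta *\<^sub>R g (Suc n)"
      using upd[of "D + 1 + n"] by simp
    also have "\<dots> = th 1 - eta *\<^sub>R (\<Sum>s=1..Suc n. g s)"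
      using Suc by (simp add: algebra_simps)
    finally show ?case .
  qed
  have F1': "th (n + 1) = th 1 - eta *\<^sub>R (\<Sum>s=1..n-D. g s)" for n
  proof (cases "n \<le> D")
    case True then show ?thesis using delay[of "n+1"] by simp
  next
    case False
    then have "n + 1 = D + 1 + (n - D)" by simp
    then show ?thesis using F1[of "n - D"] by simp
  qed
  have split: "(\<Sum>s=1..n. f s) = (\<Sum>s=1..n-k. f s) + (\<Sum>s\<in>{n-k<..n}. f s)"
    for n k :: nat and f :: "nat \<Rightarrow> 'v::comm_monoid_add"
  proof -
    have "{1..n} = {1..n-k} \<union> {n-k<..n}" by auto
    moreover have "{1..n-k} \<inter> {n-k<..n} = {}" by auto
    ultimately show ?thesis by (simp add: sum.union_disjoint)
  qed
  have cardS: "card {n-k<..n} \<le> k" for n k :: nat by simp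
  have diff: "th (D + 1 + n) = th (n + 1) - eta *\<^sub>R (\<Sum>s\<in>{n-D<..n}. g s)" for n
  proof -
    have "th (D + 1 + n) = th 1 - eta *\<^sub>R ((\<Sum>s=1..n-D. g s) + (\<Sum>s\<in>{n-D<..n}. g s))"
      using F1[of n] split[of g n D] by simp
    also have "\<dots> = (th 1 - eta *\<^sub>R (\<Sum>s=1..n-D. g s)) - eta *\<^sub>R (\<Sum>s\<in>{n-D<..n}. g s)"
      by (simp add: scaleR_right_distrib)
    also have "\<dots> = th (n + 1) - eta *\<^sub>R (\<Sum>s\<in>{n-D<..n}. g s)"
      using F1'[of n] by simp
    finally show ?thesis .
  qed
  have keyg: "inner (th s) (g s) \<ge> - (m * R)" if "s \<ge> 1" for s
  proof -
    have "inner (th s) (\<chi> a. (if y s \<le> (b s + closest_point ((\<lambda>x. x - b s) ` monoK) (th s)) $ a then 1 else 0) - alpha a)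
           \<ge> - (real CARD('n) * R)"
      by (rule key) (use strict_mono_mono[OF alpha_mono] alpha_range bounded that in auto)
    then show ?thesis by (simp add: g_def mqt_cov_def mqt_q_def mqt_theta_def m_def)
  qed
  have energy: "(norm (th (D + 1 + n)))^2 \<le> (norm (th 1))^2 + real n * C" for n
  proof (induction n)
    case 0 then show ?case using delay[of "D+1"] by simp
  next
    case (Suc n)
    define x where "x = th (D + 1 + n)"
    define w where "w = g (Suc n)"
    have step: "th (D + 1 + Suc n) = x - eta *\<^sub>R w"
      using upd[of "D + 1 + n"] by (simp add: x_def w_def)
    have ww: "inner w w \<le> m" using ipb[of w w] gcomp unfolding w_def by fastforce
    have sb: "\<bar>inner (\<Sum>s\<in>{n-D<..n}. g s) w\<bar> \<le> real D * m"
    proof -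
      have "\<bar>inner (\<Sum>s\<in>{n-D<..n}. g s) w\<bar> = \<bar>\<Sum>s\<in>{n-D<..n}. inner (g s) w\<bar>"
        by (simp add: inner_sum_left)
      also have "\<dots> \<le> (\<Sum>s\<in>{n-D<..n}. \<bar>inner (g s) w\<bar>)" by (rule sum_abs)
      also have "\<dots> \<le> (\<Sum>s\<in>{n-D<..n}. m)"
        by (rule sum_mono) (use ipb gcomp w_def in auto)
      also have "\<dots> = real (card {n-D<..n}) * m" by simp
      also have "\<dots> \<le> real D * m" using cardS[of n D] m1 by (intro mult_right_mono) auto
      finally show ?thesis .
    qed
    have xi: "inner x w = inner (th (n+1)) w - eta * inner (\<Sum>s\<in>{n-D<..n}. g s) w"
      unfolding x_def diff[of n] by (simp add: inner_diff_left)
    have "inner (th (n+1)) w \<ge> - (m * R)" using keyg[of "n+1"] by (simp add: w_def)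
    then have xw: "inner x w \<ge> - (m * R) - eta * (real D * m)"
      using xi sb eta_pos
      by (smt (verit) abs_le_iff mult_left_mono)
    have "(norm (th (D + 1 + Suc n)))^2 = (norm x)^2 - 2 * eta * inner x w + eta^2 * inner w w"
      unfolding step power2_norm_eq_inner
      by (simp add: inner_diff_left inner_diff_right inner_commute algebra_simps power2_eq_square)
    also have "\<dots> \<le> (norm x)^2 + 2 * eta * (m * R + eta * (real D * m)) + eta^2 * m"
    proof -
      have "- 2 * eta * inner x w \<le> 2 * eta * (m * R + eta * (real D * m))"
      proof -
        have "(2 * eta) * (- inner x w) \<le> (2 * eta) * (m * R + eta * (real D * m))"
          using xw eta_pos by (intro mult_left_mono) auto
        then show ?thesis by simp
      qed
      moreover have "eta^2 * inner w w \<le> eta^2 * m" using ww by (simp add: mult_left_mono)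
      ultimately show ?thesis by linarith
    qed
    also have "\<dots> = (norm x)^2 + C" by (simp add: C_def algebra_simps power2_eq_square)
    also have "\<dots> \<le> (norm (th 1))^2 + real (Suc n) * C"
      using Suc.IH by (simp add: x_def algebra_simps)
    finally show ?case .
  qed
  define d where "d = Min (range (\<lambda>a. min (alpha a) (1 - alpha a)))"
  have d0: "d > 0" unfolding d_def using alpha_range by (simp add: Min_gr_iff)
  have d1: "d \<le> 1"
  proof -
    obtain a0 :: 'n where True by simp
    have "d \<le> min (alpha a0) (1 - alpha a0)" unfolding d_def by (rule Min_le) auto
    then show ?thesis using alpha_range by auto
  qed
  have mpow: "m \<le> m powr (3/2) / d"
  proof -
    have "m = m powr 1" using m1 by simp
    also have "\<dots> \<le> m powr (3/2)" using m1 by (intro powr_mono) auto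
    also have "\<dots> \<le> m powr (3/2) / d" using d0 d1 by (simp add: le_divide_eq mult_right_le_one_le)
    finally show ?thesis .
  qed
  show ?thesis
  proof (intro allI impI)
    fix T :: nat and a :: 'n
    assume T1: "T \<ge> 1"
    define n where "n = T - D"
    define X where "X = real CARD('n) * (2 * real D + 1) / real T
                + 2 * R * real CARD('n) powr (3/2) / (eta * d * real T)"
    have Tpos: "real T > 0" using T1 by simp
    have C0: "C \<ge> 0" unfolding C_def using eta_pos R0 m1 by simp
    have E0: "norm (th (D + 1 + n)) \<le> norm (th 1) + sqrt (real T * C)"
    proof -
      have "norm (th (D + 1 + n)) = sqrt ((norm (th (D + 1 + n)))^2)" by simp
      also have "\<dots> \<le> sqrt ((norm (th 1))^2 + real n * C)" by (rule real_sqrt_le_mono[OF energy[of n]])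
      also have "\<dots> \<le> sqrt ((norm (th 1))^2) + sqrt (real n * C)"
        by (rule sqrt_add_le_add_sqrt) (use C0 in auto)
      also have "\<dots> \<le> norm (th 1) + sqrt (real T * C)"
        using C0 by (simp add: n_def mult_right_mono)
      finally show ?thesis .
    qed
    have sum1: "\<bar>\<Sum>t=1..n. g t $ a\<bar> \<le> (2 * norm (th 1) + sqrt (real T * C)) / eta"
    proof -
      have "eta *\<^sub>R (\<Sum>t=1..n. g t) = th 1 - th (D + 1 + n)" using F1[of n] by simp
      then have "(eta *\<^sub>R (\<Sum>t=1..n. g t)) $ a = (th 1 - th (D + 1 + n)) $ a" by simp
      then have eq: "eta * (\<Sum>t=1..n. g t $ a) = th 1 $ a - th (D + 1 + n) $ a" by simp
      have "eta * \<bar>\<Sum>t=1..n. g t $ a\<bar> = \<bar>eta * (\<Sum>t=1..n. g t $ a)\<bar>"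
        using eta_pos by (simp add: abs_mult)
      also have "\<dots> = \<bar>th 1 $ a - th (D + 1 + n) $ a\<bar>" by (simp only: eq)
      also have "\<dots> \<le> \<bar>th 1 $ a\<bar> + \<bar>th (D + 1 + n) $ a\<bar>" by (rule abs_triangle_ineq4)
      also have "\<dots> \<le> norm (th 1) + norm (th (D + 1 + n))"
        by (intro add_mono component_le_norm_cart)
      finally have "eta * \<bar>\<Sum>t=1..n. g t $ a\<bar> \<le> norm (th 1) + norm (th (D + 1 + n))" .
      then have "eta * \<bar>\<Sum>t=1..n. g t $ a\<bar> \<le> 2 * norm (th 1) + sqrt (real T * C)"
        using E0 by linarith
      then show ?thesis using eta_pos by (simp add: le_divide_eq mult.commute)
    qed
    have sum2: "\<bar>\<Sum>t\<in>{T-D<..T}. g t $ a\<bar> \<le> real D"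
    proof -
      have "\<bar>\<Sum>t\<in>{T-D<..T}. g t $ a\<bar> \<le> (\<Sum>t\<in>{T-D<..T}. \<bar>g t $ a\<bar>)" by (rule sum_abs)
      also have "\<dots> \<le> (\<Sum>t\<in>{T-D<..T}. 1)" by (rule sum_mono) (rule gcomp)
      also have "\<dots> \<le> real D" using cardS[of T D] by simp
      finally show ?thesis .
    qed
    have tot: "(\<Sum>t=1..T. mqt_cov y b th t a) / real T - alpha a = (\<Sum>t=1..T. g t $ a) / real T"
      using Tpos by (simp add: g_def sum_subtractf field_simps)
    have sqb: "sqrt (real T * C) / eta \<le> real T * sqrt X"
    proof -
      have "real T * C \<le> (eta * real T)^2 * X"
      proof -
        have "(eta * real T)^2 * X = eta^2 * real T * m * (2 * real D + 1)
               + 2 * R * eta * real T * (real CARD('n) powr (3/2) / d)"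
          unfolding X_def m_def using Tpos eta_pos d0 by (simp add: field_simps power2_eq_square)
        moreover have "2 * R * eta * real T * m \<le> 2 * R * eta * real T * (real CARD('n) powr (3/2) / d)"
          using mpow R0 eta_pos Tpos unfolding m_def by (intro mult_left_mono) auto
        ultimately show ?thesis unfolding C_def by (simp add: algebra_simps power2_eq_square)
      qed
      then have "sqrt (real T * C) \<le> sqrt ((eta * real T)^2 * X)" by simp
      also have "\<dots> = eta * real T * sqrt X" using eta_pos by (simp add: real_sqrt_mult)
      finally show ?thesis using eta_pos by (simp add: divide_le_eq mult.commute mult.left_commute)
    qed
    have "\<bar>\<Sum>t=1..T. g t $ a\<bar> \<le> (2 * norm (th 1) + sqrt (real T * C)) / eta + real D"
      using split[of "\<lambda>t. g t $ a" T D] sum1 sum2 unfolding n_def by linarith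
    also have "\<dots> \<le> 2 * norm (th 1) / eta + real T * sqrt X + real D * sqrt m"
    proof -
      have "real D \<le> real D * sqrt m" using m1 by (simp add: mult_le_cancel_left1)
      then show ?thesis using sqb by (simp add: add_divide_distrib)
    qed
    finally have "\<bar>\<Sum>t=1..T. g t $ a\<bar> / real T \<le> (2 * norm (th 1) / eta + real T * sqrt X + real D * sqrt m) / real T"
      using Tpos by (simp add: divide_right_mono)
    then show "\<bar>(\<Sum>t=1..T. mqt_cov y b th t a) / real T - alpha a\<bar>
      \<le> 2 * norm (th 1) / (eta * real T)
        + sqrt (real CARD('n::{finite,linorder}) * (2 * real D + 1) / real T
                + 2 * R * real CARD('n::{finite,linorder}) powr (3/2)
                  / (eta * (Min (range (\<lambda>a. min (alpha a) (1 - alpha a)))) * real T))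
        + real D * sqrt (real CARD('n::{finite,linorder})) / real T"
      using Tpos unfolding tot X_def d_def m_def
      by (simp add: add_divide_distrib)
  qed
qed

end
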